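(* Let $\alpha>0$ and let $\nu_1\in\mathcal M^+_\alpha(\mathbb R)$ with $\operatorname{supp}\nu_1\subset(-\infty,0]$. Then for every $\beta>0$, $$C_\alpha[\nu_1](z)=e^{i\pi\beta}\,C_{\alpha+\beta}[\nu_2](z),\qquad z\in\mathbb C^+,$$ where $\nu_2\in\mathcal M^+_{\alpha+\beta}(\mathbb R)$ is the locally absolutely continuous measure $$\nu_2(d\tau)=\frac1{B(\alpha,\beta)}\Big(\int_{(\tau,0]}(t-\tau)^{\beta-1}\nu_1(dt)\Big)d\tau.$$
   Context: $\mathbb C^+=\{z:\operatorname{Im}z>0\}$. For $\alpha\ge0$, $\mathcal M^+_\alpha(\mathbb R)$ is the set of positive Borel (Radon) measures $\mu$ on $\mathbb R$ with $\int_{\mathbb R}(1+|t|)^{-\alpha}\mu(dt)<\infty$. For $\alpha>0$, $C_\alpha[\mu](z)=\int_{\mathbb R}\frac{\mu(dt)}{(z+t)^\alpha}$, $z\in\mathbb C^+$, with the principal branch of the power. $B$ is the beta function. *)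

theory Defs
  imports "HOL-Analysis.Analysis"
begin

definition Mplus :: "real \<Rightarrow> real measure \<Rightarrow> bool" where
  "Mplus \<alpha> \<mu> \<longleftrightarrow> sets \<mu> = sets borel \<and>
     (\<integral>\<^sup>+ t. ennreal ((1 + \<bar>t\<bar>) powr (-\<alpha>)) \<partial>\<mu>) < \<infinity>"

text \<open>Generalized Cauchy transform C_alpha[mu](z) = int mu(dt) / (z+t)^alpha,
  principal branch (complex powr uses the principal logarithm Ln).\<close>
definition Ctrans :: "real \<Rightarrow> real measure \<Rightarrow> complex \<Rightarrow> complex" where
  "Ctrans \<alpha> \<mu> z = (\<integral> t. 1 / ((z + complex_of_real t) powr complex_of_real \<alpha>) \<partial>\<mu>)"

definition nu2 :: "real \<Rightarrow> real \<Rightarrow> real measure \<Rightarrow> real measure" where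
  "nu2 \<alpha> \<beta> \<nu> = density lborel (\<lambda>\<tau>. ennreal (1 / Beta \<alpha> \<beta>) *
      (\<integral>\<^sup>+ t. indicator {\<tau><..0} t * ennreal ((t - \<tau>) powr (\<beta> - 1)) \<partial>\<nu>))"

end

theory Submission
  imports Defs "HOL-Complex_Analysis.Complex_Analysis"
begin


lemma gamma_scaled:
  fixes c l :: real assumes c: "c > 0" and l: "l > 0"
  shows "(\<integral>\<^sup>+x. ennreal (indicator {0<..} x * x powr (c - 1) * exp (-(l * x))) \<partial>lborel)
         = ennreal (Gamma c * l powr (-c))"
proof -
  have "ennreal (Gamma c) = (\<integral>\<^sup>+ t. ennreal (indicator {0..} t * t powr (c - 1) / exp t) \<partial>lborel)"
    using Gamma_conv_nn_integral_real[OF c] by simp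
  also have "\<dots> = ennreal \<bar>l\<bar> * (\<integral>\<^sup>+ x. ennreal (indicator {0..} (0 + l * x) * (0 + l * x) powr (c - 1) / exp (0 + l * x)) \<partial>lborel)"
    by (rule nn_integral_real_affine) (use l in auto)
  also have "\<dots> = ennreal l * (\<integral>\<^sup>+ x. ennreal (l powr (c - 1)) * ennreal (indicator {0<..} x * x powr (c - 1) * exp (-(l * x))) \<partial>lborel)"
    using l by (intro arg_cong2[where f="(*)"] nn_integral_cong)
       (auto simp: indicator_def powr_mult exp_minus field_simps ennreal_mult'[symmetric] zero_le_mult_iff)
  also have "\<dots> = ennreal (l * l powr (c - 1)) * (\<integral>\<^sup>+ x. ennreal (indicator {0<..} x * x powr (c - 1) * exp (-(l * x))) \<partial>lborel)"
    by (subst nn_integral_cmult) (use l in \<open>auto simp: ennreal_mult' mult.assoc\<close>)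
  also have "l * l powr (c - 1) = l powr c"
    using l by (simp add: powr_diff)
  finally have *: "ennreal (Gamma c) = ennreal (l powr c) * (\<integral>\<^sup>+ x. ennreal (indicator {0<..} x * x powr (c - 1) * exp (-(l * x))) \<partial>lborel)" .
  have "ennreal (Gamma c * l powr (-c)) = ennreal (l powr (-c)) * ennreal (Gamma c)"
    using l Gamma_real_pos[OF c] by (simp add: ennreal_mult' mult.commute)
  also have "\<dots> = ennreal (l powr (-c) * l powr c) * (\<integral>\<^sup>+ x. ennreal (indicator {0<..} x * x powr (c - 1) * exp (-(l * x))) \<partial>lborel)"
    by (subst *) (simp add: ennreal_mult' mult.assoc)
  also have "l powr (-c) * l powr c = 1"
    using l by (simp add: powr_minus)
  finally show ?thesis by simp
qed



lemma beta2_nn: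
  fixes a b A :: real assumes a: "a > 0" and b: "b > 0" and A: "A > 0"
  shows "(\<integral>\<^sup>+s. ennreal (indicator {0<..} s * s powr (b - 1) * (A + s) powr (-(a+b))) \<partial>lborel)
         = ennreal (Beta a b * A powr (-a))"
proof -
  define G where "G = Gamma (a + b)"
  have G: "G > 0" unfolding G_def using a b by (intro Gamma_real_pos) auto
  let ?L = "(\<integral>\<^sup>+s. ennreal (indicator {0<..} s * s powr (b - 1) * (A + s) powr (-(a+b))) \<partial>lborel)"
  have "?L * ennreal G = (\<integral>\<^sup>+s. ennreal (indicator {0<..} s * s powr (b - 1)) * ennreal (G * (A + s) powr (-(a+b))) \<partial>lborel)"
    by (subst nn_integral_multc[symmetric]) (use G in \<open>auto intro!: nn_integral_cong simp: ennreal_mult'[symmetric] indicator_def mult_ac\<close>)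
  also have "\<dots> = (\<integral>\<^sup>+s. \<integral>\<^sup>+x. ennreal (indicator {0<..} s * s powr (b - 1)) * ennreal (indicator {0<..} x * x powr (a + b - 1) * exp (-((A + s) * x))) \<partial>lborel \<partial>lborel)"
  proof (intro nn_integral_cong)
    fix s :: real
    show "ennreal (indicator {0<..} s * s powr (b - 1)) * ennreal (G * (A + s) powr (-(a+b))) =
      (\<integral>\<^sup>+x. ennreal (indicator {0<..} s * s powr (b - 1)) * ennreal (indicator {0<..} x * x powr (a + b - 1) * exp (-((A + s) * x))) \<partial>lborel)"
    proof (cases "s > 0")
      case True
      show ?thesis
        by (subst nn_integral_cmult) (use True A a b in \<open>simp_all add: gamma_scaled G_def\<close>)
    qed (simp add: indicator_def)
  qed
  also have "\<dots> = (\<integral>\<^sup>+x. \<integral>\<^sup>+s. ennreal (indicator {0<..} s * s powr (b - 1)) * ennreal (indicator {0<..} x * x powr (a + b - 1) * exp (-((A + s) * x))) \<partial>lborel \<partial>lborel)"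
    by (rule lborel_pair.Fubini') measurable
  also have "\<dots> = (\<integral>\<^sup>+x. ennreal (indicator {0<..} x * x powr (a + b - 1) * exp (-(A * x))) * (\<integral>\<^sup>+s. ennreal (indicator {0<..} s * s powr (b - 1) * exp (-(x * s))) \<partial>lborel) \<partial>lborel)"
    by (subst nn_integral_cmult[symmetric])
       (auto intro!: nn_integral_cong simp: ennreal_mult'[symmetric] indicator_def exp_add[symmetric] algebra_simps)
  also have "\<dots> = (\<integral>\<^sup>+x. ennreal (Gamma b) * ennreal (indicator {0<..} x * x powr (a - 1) * exp (-(A * x))) \<partial>lborel)"
  proof (intro nn_integral_cong)
    fix x :: real
    show "ennreal (indicator {0<..} x * x powr (a + b - 1) * exp (-(A * x))) * (\<integral>\<^sup>+s. ennreal (indicator {0<..} s * s powr (b - 1) * exp (-(x * s))) \<partial>lborel)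
       = ennreal (Gamma b) * ennreal (indicator {0<..} x * x powr (a - 1) * exp (-(A * x)))"
    proof (cases "x > 0")
      case True
      have e: "x powr (a + b - 1) * (x powr (-b)) = x powr (a - 1)"
        using True by (simp add: powr_add[symmetric])
      have g: "(\<integral>\<^sup>+s. ennreal (indicator {0<..} s * s powr (b - 1) * exp (-(x * s))) \<partial>lborel) = ennreal (Gamma b * x powr (-b))"
        using gamma_scaled[OF b True] .
      show ?thesis unfolding g using True b Gamma_real_pos[OF b]
        by (simp add: ennreal_mult'[symmetric] e[symmetric] mult_ac)
    qed (simp add: indicator_def)
  qed
  also have "\<dots> = ennreal (Gamma b) * ennreal (Gamma a * A powr (-a))"
    by (subst nn_integral_cmult) (use a A in \<open>simp_all add: gamma_scaled\<close>)
  also have "\<dots> = ennreal (Beta a b * A powr (-a)) * ennreal G"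
    using a b G Gamma_real_pos[OF a] Gamma_real_pos[OF b] A
    by (simp add: ennreal_mult'[symmetric] Beta_def G_def less_imp_neq[symmetric])
  finally have *: "?L * ennreal G = ennreal (Beta a b * A powr (-a)) * ennreal G" .
  have "?L = ?L * ennreal G * ennreal (1 / G)"
    using G by (simp add: mult.assoc ennreal_mult'[symmetric])
  also note *
  also have "ennreal (Beta a b * A powr (-a)) * ennreal G * ennreal (1 / G) = ennreal (Beta a b * A powr (-a))"
    using G by (simp add: mult.assoc ennreal_mult'[symmetric])
  finally show ?thesis .
qed



lemma geom_lb:
  fixes x s d M :: real
  assumes "d > 0" "M \<ge> 0" "s \<ge> 0" "x \<ge> d" "x \<ge> s - M"
  shows "d / (M + d + 1) * (1 + s) \<le> x"
proof (cases "s \<le> M + d")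
  case True
  have "d / (M + d + 1) * (1 + s) \<le> d / (M + d + 1) * (M + d + 1)"
    using assms True by (intro mult_left_mono) auto
  also have "\<dots> = d" using assms by simp
  finally show ?thesis using assms by simp
next
  case False
  have h: "0 \<le> (s - (M + d)) * (M + 1)" using False assms by simp
  have e: "(s - M) * (M + d + 1) - d * (1 + s) = (s - (M + d)) * (M + 1)" by algebra
  have "d * (1 + s) \<le> (s - M) * (M + d + 1)"
    using h e by linarith
  hence "d / (M + d + 1) * (1 + s) \<le> s - M"
    using assms by (simp add: field_simps)
  thus ?thesis using assms by simp
qed

lemma segment_lb:
  fixes u :: complex and s p :: real
  assumes u: "Im u < 0" and p: "0 \<le> p" "p \<le> 1" and s: "s \<ge> 0"
  defines "d \<equiv> min (1/2) (- Im u / (2 * (1 + \<bar>Re u\<bar>)))"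
  shows "d \<le> norm (of_real s + (1 + of_real p * (u - 1)))"
proof -
  let ?w = "of_real s + (1 + of_real p * (u - 1))"
  have d1: "d \<le> 1/2" unfolding d_def by (rule min.cobounded1)
  have d2: "d \<le> - Im u / (2 * (1 + \<bar>Re u\<bar>))" unfolding d_def by (rule min.cobounded2)
  have Imw: "Im ?w = p * Im u" by simp
  have Rew: "Re ?w = s + 1 + p * (Re u - 1)" by simp
  show ?thesis
  proof (cases "p * (- Im u) \<ge> - Im u / (2 * (1 + \<bar>Re u\<bar>))")
    case True
    have "d \<le> \<bar>Im ?w\<bar>" using True d2 u p by (simp add: Imw abs_mult)
    also have "\<dots> \<le> norm ?w" by (rule abs_Im_le_cmod)
    finally show ?thesis .
  next
    case False
    define k where "k = 2 * (1 + \<bar>Re u\<bar>)"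
    have k: "k > 0" unfolding k_def by (simp add: add_pos_nonneg)
    define y where "y = - Im u"
    have y: "y > 0" using u unfolding y_def by simp
    have "p * y < y / k" using False unfolding k_def y_def by simp
    hence "p * y * k < y" using k by (simp only: less_divide_eq)
    hence "(p * k) * y < 1 * y" by (simp add: mult_ac)
    hence "p * k < 1" using y mult_less_cancel_right_pos[OF y, of "p*k" 1] by blast
    hence "p * (1 + \<bar>Re u\<bar>) \<le> 1/2" unfolding k_def by (simp add: algebra_simps)
    moreover have "p * (Re u - 1) \<ge> - (p * (1 + \<bar>Re u\<bar>))" using p
    proof -
      have "p * (-(1 + \<bar>Re u\<bar>)) \<le> p * (Re u - 1)" using p by (intro mult_left_mono) auto
      thus ?thesis by (simp add: algebra_simps)
    qed
    ultimately have "1/2 \<le> Re ?w" using s by (simp add: Rew)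
    also have "\<dots> \<le> norm ?w" by (rule complex_Re_le_cmod)
    finally show ?thesis using d1 by simp
  qed
qed

lemma segment_ub:
  fixes u :: complex and p :: real
  assumes p: "0 \<le> p" "p \<le> 1"
  shows "norm (1 + of_real p * (u - 1)) \<le> 1 + norm (u - 1)"
proof -
  have "norm (1 + of_real p * (u - 1)) \<le> 1 + norm (of_real p * (u - 1))"
    by (metis norm_one norm_triangle_ineq)
  also have "norm (of_real p * (u - 1)) = p * norm (u - 1)" using p by (simp add: norm_mult)
  also have "\<dots> \<le> norm (u - 1)" using p by (simp add: mult_left_le_one_le)
  finally show ?thesis by simp
qed

lemma segment_bound:
  fixes u :: complex
  assumes u: "Im u < 0"
  obtains c where "c > 0" "\<And>p s. 0 \<le> p \<Longrightarrow> p \<le> 1 \<Longrightarrow> s \<ge> 0 \<Longrightarrow>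
     c * (1 + s) \<le> norm (of_real s + (1 + of_real p * (u - 1)))"
proof -
  define d where "d = min (1/2) (- Im u / (2 * (1 + \<bar>Re u\<bar>)))"
  define M where "M = 1 + norm (u - 1)"
  have d: "d > 0" using u unfolding d_def by (auto simp: field_simps add_pos_nonneg)
  have M: "M \<ge> 0" unfolding M_def by simp
  show ?thesis
  proof (rule that[of "d / (M + d + 1)"])
    show "d / (M + d + 1) > 0" using d M by simp
    fix p s :: real assume p: "0 \<le> p" "p \<le> 1" and s: "s \<ge> 0"
    show "d / (M + d + 1) * (1 + s) \<le> norm (of_real s + (1 + of_real p * (u - 1)))"
    proof (rule geom_lb[OF d M s])
      show "d \<le> norm (of_real s + (1 + of_real p * (u - 1)))"
        using segment_lb[OF u p s] unfolding d_def .
      have "norm (complex_of_real s) \<le> norm (of_real s + (1 + of_real p * (u - 1))) + norm (1 + of_real p * (u - 1))"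
        by (metis add_diff_cancel_right' norm_triangle_ineq4)
      thus "s - M \<le> norm (of_real s + (1 + of_real p * (u - 1)))"
        using segment_ub[OF p, of u] s unfolding M_def by simp
    qed
  qed
qed

lemma halfplane_bound:
  fixes z :: complex
  assumes z: "Im z > 0"
  obtains c where "c > 0" "\<And>t. c * (1 + \<bar>t\<bar>) \<le> norm (z + of_real t)"
proof -
  define d where "d = Im z"
  define M where "M = norm z"
  have d: "d > 0" using z unfolding d_def by simp
  have M: "M \<ge> 0" unfolding M_def by simp
  show ?thesis
  proof (rule that[of "d / (M + d + 1)"])
    show "d / (M + d + 1) > 0" using d M by simp
    fix t :: real
    show "d / (M + d + 1) * (1 + \<bar>t\<bar>) \<le> norm (z + of_real t)"
    proof (rule geom_lb[OF d M])
      show "d \<le> norm (z + of_real t)" unfolding d_def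
        using abs_Im_le_cmod[of "z + of_real t"] z by simp
      have "norm (complex_of_real t) \<le> norm (z + of_real t) + norm z"
        by (metis add_diff_cancel_left' norm_triangle_ineq4 add.commute)
      thus "\<bar>t\<bar> - M \<le> norm (z + of_real t)" unfolding M_def by simp
    qed simp
  qed
qed



definition Kf :: "real \<Rightarrow> real \<Rightarrow> complex \<Rightarrow> real \<Rightarrow> complex" where
  "Kf b g v s = of_real s powr of_real b * (of_real s + v) powr (- of_real g)"

definition Kd :: "real \<Rightarrow> real \<Rightarrow> complex \<Rightarrow> real \<Rightarrow> complex" where
  "Kd b g v s = of_real b * of_real s powr (of_real b - 1) * (of_real s + v) powr (- of_real g)
     - of_real g * of_real s powr of_real b * (of_real s + v) powr (- of_real g - 1)"

lemma ofreal_pos_notin: "s > 0 \<Longrightarrow> complex_of_real s \<notin> \<real>\<^sub>\<le>\<^sub>0"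
  by (simp add: complex_nonpos_Reals_iff)

lemma Kf_deriv:
  assumes s: "s > 0" and sv: "of_real s + v \<notin> \<real>\<^sub>\<le>\<^sub>0"
  shows "((Kf b g v) has_vector_derivative Kd b g v s) (at s)"
proof -
  let ?z = "complex_of_real s"
  have d1: "((\<lambda>z. z powr of_real b) has_field_derivative (of_real b * ?z powr (of_real b - 1))) (at ?z)"
    by (rule has_field_derivative_powr) (rule ofreal_pos_notin[OF s])
  have d2: "((\<lambda>z. z powr (- of_real g)) has_field_derivative (- of_real g * (?z + v) powr (- of_real g - 1))) (at (?z + v))"
    by (rule has_field_derivative_powr) (rule sv)
  have d0: "((\<lambda>z. z + v) has_field_derivative 1) (at ?z)"
    by (auto intro!: derivative_eq_intros)
  have d3: "((\<lambda>z. (z + v) powr (- of_real g)) has_field_derivative (- of_real g * (?z + v) powr (- of_real g - 1)) * 1) (at ?z)"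
    using DERIV_chain'[where f="\<lambda>z. z + v" and g="\<lambda>z. z powr (- of_real g)", OF d0 d2] .
  note dm = DERIV_mult[OF d1 d3]
  from has_vector_derivative_real_field[OF dm]
  show ?thesis unfolding Kf_def Kd_def by (simp add: algebra_simps)
qed

lemma norm_ofreal_powr: "s \<ge> 0 \<Longrightarrow> norm (complex_of_real s powr complex_of_real e) = s powr e"
  by (simp add: powr_of_real)

lemma norm_ofreal_powr': "s \<ge> 0 \<Longrightarrow> norm (complex_of_real s powr (complex_of_real e - 1)) = s powr (e - 1)"
  using norm_ofreal_powr[of s "e - 1"] by simp

lemma norm_powr_neg_bound:
  fixes w :: complex and c x e :: real
  assumes c: "c > 0" "x > 0" and e: "e \<ge> 0" and hw: "c * x \<le> norm w"
  shows "norm (w powr (- of_real e)) \<le> c powr (-e) * x powr (-e)"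
proof -
  have "norm (w powr (- of_real e)) = norm w powr (-e)"
    by (subst norm_powr_real_powr') auto
  also have "\<dots> \<le> (c * x) powr (-e)"
    using c e hw by (intro powr_mono2') (auto simp: mult_pos_pos)
  also have "\<dots> = c powr (-e) * x powr (-e)" using c by (simp add: powr_mult)
  finally show ?thesis .
qed

lemma norm_powr_neg_bound1:
  fixes w :: complex and c x e :: real
  assumes c: "c > 0" "x > 0" and e: "e \<ge> 0" and hw: "c * x \<le> norm w"
  shows "norm (w powr (- of_real e - 1)) \<le> c powr (-e - 1) * x powr (-e - 1)"
proof -
  have *: "- complex_of_real e - 1 = - complex_of_real (e + 1)" "- e - 1 = -(e + 1)" by simp_all
  show ?thesis unfolding * using norm_powr_neg_bound[OF c _ hw, of "e + 1"] e by simp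
qed

context
  fixes b g c :: real and v :: complex
  assumes b: "b > 0" and bg: "b < g" and c: "c > 0"
    and hc: "\<And>s. s \<ge> 0 \<Longrightarrow> c * (1 + s) \<le> norm (of_real s + v)"
begin

lemma bound_P:
  assumes s: "s > 0"
  shows "norm (of_real s powr (of_real b - 1) * (of_real s + v) powr (- of_real g))
          \<le> c powr (-g) * (s powr (b - 1) * (1 + s) powr (-g))"
proof -
  have "norm ((of_real s + v) powr (- of_real g)) \<le> c powr (-g) * (1 + s) powr (-g)"
    using s bg b by (intro norm_powr_neg_bound c hc) auto
  thus ?thesis using s
    by (simp add: norm_mult norm_ofreal_powr' mult_left_mono mult_ac)
qed

lemma bound_Kf:
  assumes s: "s > 0"
  shows "norm (Kf b g v s) \<le> c powr (-g) * (s powr b * (1 + s) powr (-g))"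
proof -
  have "norm ((of_real s + v) powr (- of_real g)) \<le> c powr (-g) * (1 + s) powr (-g)"
    using s bg b by (intro norm_powr_neg_bound c hc) auto
  thus ?thesis using s unfolding Kf_def
    by (simp add: norm_mult norm_ofreal_powr mult_left_mono mult_ac)
qed

lemma bound_Kd:
  assumes s: "s > 0"
  shows "norm (Kd b g v s) \<le> (b * c powr (-g) + g * c powr (-g - 1)) * (s powr (b - 1) * (1 + s) powr (-g))"
proof -
  have n1: "norm ((of_real s + v) powr (- of_real g)) \<le> c powr (-g) * (1 + s) powr (-g)"
    using s bg b by (intro norm_powr_neg_bound c hc) auto
  have n2: "norm ((of_real s + v) powr (- of_real g - 1)) \<le> c powr (-g - 1) * (1 + s) powr (-g - 1)"
    using s bg b by (intro norm_powr_neg_bound1 c hc) auto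
  have t1: "norm (of_real b * of_real s powr (of_real b - 1) * (of_real s + v) powr (- of_real g))
      \<le> b * c powr (-g) * (s powr (b - 1) * (1 + s) powr (-g))"
  proof -
    have "norm (of_real b * of_real s powr (of_real b - 1) * (of_real s + v) powr (- of_real g))
        = b * s powr (b - 1) * norm ((of_real s + v) powr (- of_real g))"
      using s b by (simp add: norm_mult norm_ofreal_powr')
    also have "\<dots> \<le> b * s powr (b - 1) * (c powr (-g) * (1 + s) powr (-g))"
      using b by (intro mult_left_mono n1) auto
    finally show ?thesis by (simp add: mult_ac)
  qed
  have t2: "norm (of_real g * of_real s powr of_real b * (of_real s + v) powr (- of_real g - 1))
      \<le> g * c powr (-g - 1) * (s powr (b - 1) * (1 + s) powr (-g))"
  proof -
    define X where "X = s powr (b - 1) * (1 + s) powr (-g)"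
    have X: "X \<ge> 0" unfolding X_def by simp
    have "norm (of_real g * of_real s powr of_real b * (of_real s + v) powr (- of_real g - 1))
        = g * s powr b * norm ((of_real s + v) powr (- of_real g - 1))"
      using s b bg by (simp add: norm_mult norm_ofreal_powr)
    also have "\<dots> \<le> g * s powr b * (c powr (-g - 1) * (1 + s) powr (-g - 1))"
      using b bg by (intro mult_left_mono n2) auto
    also have "\<dots> = g * c powr (-g - 1) * (s powr b * (1 + s) powr (-g - 1))"
      by (simp add: mult_ac)
    also have "s powr b * (1 + s) powr (-g - 1) = (s / (1 + s)) * X"
    proof -
      have e1: "s powr b = s * s powr (b - 1)" using s by (simp add: powr_diff)
      have e2: "(1 + s) powr (-g - 1) = (1 + s) powr (-g) / (1 + s)" using s by (simp add: powr_diff)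
      show ?thesis unfolding X_def by (simp add: e1 e2)
    qed
    also have "g * c powr (-g - 1) * ((s / (1 + s)) * X) \<le> g * c powr (-g - 1) * (1 * X)"
      using s b bg c X by (intro mult_left_mono mult_right_mono) auto
    finally show ?thesis unfolding X_def by simp
  qed
  have "norm (Kd b g v s) \<le> norm (of_real b * of_real s powr (of_real b - 1) * (of_real s + v) powr (- of_real g))
      + norm (of_real g * of_real s powr of_real b * (of_real s + v) powr (- of_real g - 1))"
    unfolding Kd_def by (rule norm_triangle_ineq4)
  also have "\<dots> \<le> (b * c powr (-g) + g * c powr (-g - 1)) * (s powr (b - 1) * (1 + s) powr (-g))"
    using t1 t2 by (simp add: algebra_simps)
  finally show ?thesis .
qed

lemma Kf_lim0: "((Kf b g v) \<longlongrightarrow> 0) (at_right 0)"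
proof (rule tendsto_norm_zero_cancel, rule Lim_null_comparison)
  show "\<forall>\<^sub>F s in at_right 0. norm (norm (Kf b g v s)) \<le> c powr (-g) * s powr b"
  proof (rule eventually_at_rightI[of 0 1])
    fix s :: real assume s: "s \<in> {0<..<1}"
    have "norm (Kf b g v s) \<le> c powr (-g) * (s powr b * (1 + s) powr (-g))"
      using s by (intro bound_Kf) auto
    also have "\<dots> \<le> c powr (-g) * (s powr b * 1)"
    proof -
      have "(1 + s) powr (-g) \<le> 1 powr (-g)" using s bg b by (intro powr_mono2') auto
      thus ?thesis by (intro mult_left_mono) auto
    qed
    finally show "norm (norm (Kf b g v s)) \<le> c powr (-g) * s powr b" by simp
  qed simp
  show "((\<lambda>s. c powr (-g) * s powr b) \<longlongrightarrow> 0) (at_right 0)"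
    using b by (auto intro!: tendsto_eq_intros tendsto_zero_powrI eventually_at_rightI[of 0 1])
qed

end



lemma int_beta_bound:
  fixes b g :: real assumes b: "b > 0" and bg: "b < g"
  shows "integrable lborel (\<lambda>s. indicator {0<..} s * s powr (b - 1) * (1 + s) powr (-g))"
proof (rule integrableI_nonneg)
  show "(\<lambda>s. indicator {0<..} s * s powr (b - 1) * (1 + s) powr (-g)) \<in> borel_measurable lborel"
    by measurable
  show "AE x in lborel. 0 \<le> indicat_real {0<..} x * x powr (b - 1) * (1 + x) powr - g"
    by (auto simp: indicator_def)
  have "(\<integral>\<^sup>+s. ennreal (indicator {0<..} s * s powr (b - 1) * (1 + s) powr (-((g - b) + b))) \<partial>lborel)
         = ennreal (Beta (g - b) b * 1 powr (-(g - b)))"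
    using beta2_nn[of "g - b" b 1] b bg by simp
  thus "(\<integral>\<^sup>+s. ennreal (indicator {0<..} s * s powr (b - 1) * (1 + s) powr (-g)) \<partial>lborel) < \<infinity>"
    by simp
qed

context
  fixes b g c :: real and v :: complex
  assumes b: "b > 0" and bg: "b < g" and c: "c > 0"
    and hc: "\<And>s. s \<ge> 0 \<Longrightarrow> c * (1 + s) \<le> norm (of_real s + v)"
    and hv: "\<And>s. s > 0 \<Longrightarrow> of_real s + v \<notin> \<real>\<^sub>\<le>\<^sub>0"
begin

lemma Kf_limtop: "((Kf b g v) \<longlongrightarrow> 0) at_top"
proof (rule tendsto_norm_zero_cancel, rule Lim_null_comparison)
  show "\<forall>\<^sub>F s in at_top. norm (norm (Kf b g v s)) \<le> c powr (-g) * s powr (b - g)"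
  proof (rule eventually_at_top_linorderI[of 1])
    fix s :: real assume s: "s \<ge> 1"
    have "norm (Kf b g v s) \<le> c powr (-g) * (s powr b * (1 + s) powr (-g))"
      using s by (intro bound_Kf[OF b bg c hc]) auto
    also have "\<dots> \<le> c powr (-g) * (s powr b * s powr (-g))"
    proof -
      have "(1 + s) powr (-g) \<le> s powr (-g)" using s bg b by (intro powr_mono2') auto
      thus ?thesis by (intro mult_left_mono) auto
    qed
    also have "s powr b * s powr (-g) = s powr (b - g)" by (simp add: powr_add[symmetric])
    finally show "norm (norm (Kf b g v s)) \<le> c powr (-g) * s powr (b - g)" by simp
  qed
  show "((\<lambda>s. c powr (-g) * s powr (b - g)) \<longlongrightarrow> 0) at_top"
  proof -
    have "((\<lambda>s. s powr (b - g)) \<longlongrightarrow> 0) at_top"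
      using bg by (intro tendsto_neg_powr filterlim_ident) auto
    thus ?thesis by (rule tendsto_mult_right_zero)
  qed
qed

lemma Kd_meas: "Kd b g v \<in> borel_measurable borel"
  unfolding Kd_def by measurable

lemma Kd_set_integrable: "set_integrable lborel {0<..} (Kd b g v)"
  unfolding set_integrable_def
proof (rule Bochner_Integration.integrable_bound)
  define C where "C = b * c powr (-g) + g * c powr (-g - 1)"
  show "integrable lborel (\<lambda>s. C * (indicator {0<..} s * s powr (b - 1) * (1 + s) powr (-g)))"
    by (intro integrable_mult_right int_beta_bound b bg)
  show "(\<lambda>x. indicat_real {0<..} x *\<^sub>R Kd b g v x) \<in> borel_measurable lborel"
    using Kd_meas by measurable
  show "AE x in lborel. norm (indicat_real {0<..} x *\<^sub>R Kd b g v x) \<le> norm (C * (indicator {0<..} x * x powr (b - 1) * (1 + x) powr (-g)))"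
  proof (rule AE_I2)
    fix x :: real
    show "norm (indicat_real {0<..} x *\<^sub>R Kd b g v x) \<le> norm (C * (indicator {0<..} x * x powr (b - 1) * (1 + x) powr (-g)))"
    proof (cases "x > 0")
      case True
      have C: "C \<ge> 0" unfolding C_def using b bg by simp
      have "norm (Kd b g v x) \<le> C * (x powr (b - 1) * (1 + x) powr (-g))"
        unfolding C_def by (rule bound_Kd[OF b bg c hc True])
      thus ?thesis using True C by (simp add: abs_mult)
    qed (simp add: indicator_def)
  qed
qed

lemma Kd_integral_zero: "(\<integral>s. indicator {0<..} s *\<^sub>R Kd b g v s \<partial>lborel) = 0"
proof -
  have "(LBINT x=ereal 0..\<infinity>. Kd b g v x) = 0 - 0"
  proof (rule interval_integral_FTC_integrable)
    show "ereal 0 < \<infinity>" by simp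
    fix x assume "ereal 0 < ereal x" "ereal x < \<infinity>"
    hence x: "x > 0" by simp
    show "(Kf b g v has_vector_derivative Kd b g v x) (at x)"
      by (rule Kf_deriv[OF x hv[OF x]])
    show "isCont (Kd b g v) x"
      unfolding Kd_def using x hv[OF x]
      by (intro continuous_intros) (auto simp: Lim_ident_at complex_nonpos_Reals_iff complex_eq_iff)
  next
    show "set_integrable lborel (einterval (ereal 0) \<infinity>) (Kd b g v)"
      using Kd_set_integrable by simp
    show "((Kf b g v \<circ> real_of_ereal) \<longlongrightarrow> 0) (at_right (ereal 0))"
      unfolding ereal_tendsto_simps using Kf_lim0[OF b bg c hc] .
    show "((Kf b g v \<circ> real_of_ereal) \<longlongrightarrow> 0) (at_left \<infinity>)"
      unfolding ereal_tendsto_simps using Kf_limtop .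
  qed
  thus ?thesis
    unfolding interval_lebesgue_integral_def set_lebesgue_integral_def einterval_def
    by (simp add: greaterThan_def)
qed

end




lemma integrable_prod_real:
  fixes f h :: "real \<Rightarrow> real"
  assumes f: "integrable lborel f" and h: "integrable lborel h"
    and f0: "\<And>x. f x \<ge> 0" and h0: "\<And>y. h y \<ge> 0"
  shows "integrable (lborel \<Otimes>\<^sub>M lborel) (\<lambda>(x, y). f x * h y)"
proof (rule integrableI_nonneg)
  have [measurable]: "f \<in> borel_measurable borel" "h \<in> borel_measurable borel"
    using borel_measurable_integrable[OF f] borel_measurable_integrable[OF h] by simp_all
  show "(\<lambda>(x, y). f x * h y) \<in> borel_measurable (lborel \<Otimes>\<^sub>M lborel)"
    by measurable
  show "AE x in lborel \<Otimes>\<^sub>M lborel. 0 \<le> (case x of (x, y) \<Rightarrow> f x * h y)"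
    using f0 h0 by (auto intro!: AE_I2)
  have "(\<integral>\<^sup>+ z. ennreal (case z of (x, y) \<Rightarrow> f x * h y) \<partial>(lborel \<Otimes>\<^sub>M lborel))
      = (\<integral>\<^sup>+ x. \<integral>\<^sup>+ y. ennreal (f x * h y) \<partial>lborel \<partial>lborel)"
    by (subst lborel.nn_integral_fst[symmetric]) (auto simp: case_prod_unfold)
  also have "\<dots> = (\<integral>\<^sup>+ x. ennreal (f x) * (\<integral>\<^sup>+ y. ennreal (h y) \<partial>lborel) \<partial>lborel)"
    using f0 h0 by (subst nn_integral_cmult[symmetric]) (auto simp: ennreal_mult)
  also have "\<dots> = (\<integral>\<^sup>+ x. ennreal (f x) \<partial>lborel) * (\<integral>\<^sup>+ y. ennreal (h y) \<partial>lborel)"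
    by (subst nn_integral_multc) auto
  also have "\<dots> < \<infinity>"
  proof -
    have "(\<integral>\<^sup>+ x. ennreal (f x) \<partial>lborel) < \<infinity>" "(\<integral>\<^sup>+ x. ennreal (h x) \<partial>lborel) < \<infinity>"
      using f h f0 h0 by (simp_all add: nn_integral_eq_integral)
    thus ?thesis by (simp add: ennreal_mult_less_top)
  qed
  finally show "(\<integral>\<^sup>+ z. ennreal (case z of (x, y) \<Rightarrow> f x * h y) \<partial>(lborel \<Otimes>\<^sub>M lborel)) < \<infinity>" .
qed



lemma D_ident:
  fixes a b g s :: real and u w :: complex
  assumes w: "w \<noteq> 0" and s: "s > 0" and sw: "of_real s + w \<noteq> 0" and g: "g = a + b"
  shows "of_real a * w powr (of_real a - 1) * (u - 1) * (of_real s powr (of_real b - 1) * (of_real s + w) powr (- of_real g))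
         + of_real s powr (of_real b - 1) * (- of_real g * (of_real s + w) powr (- of_real g - 1) * (u - 1)) * w powr of_real a
       = - (u - 1) * w powr (of_real a - 1) * Kd b g w s"
proof -
  have e1: "w powr of_real a = w * w powr (of_real a - 1)"
    using powr_add[of w 1 "of_real a - 1"] by simp
  have e2: "complex_of_real s powr of_real b = of_real s * of_real s powr (of_real b - 1)"
    using powr_add[of "complex_of_real s" 1 "of_real b - 1"] by simp
  have e3: "(complex_of_real s + w) powr (- of_real g) = (of_real s + w) * (of_real s + w) powr (- of_real g - 1)"
    using powr_add[of "complex_of_real s + w" 1 "- of_real g - 1"] by simp
  show ?thesis unfolding Kd_def e1 e2 e3
    by (simp add: g algebra_simps)
qed

lemma powr_between:
  fixes x c M e :: real assumes "c > 0" "c \<le> x" "x \<le> M"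
  shows "x powr e \<le> c powr e + M powr e"
proof (cases "e \<ge> 0")
  case True
  hence "x powr e \<le> M powr e" using assms by (intro powr_mono2) auto
  thus ?thesis by (smt (verit) powr_ge_zero)
next
  case False
  hence "x powr e \<le> c powr e" using assms by (intro powr_mono2') auto
  thus ?thesis by (smt (verit) powr_ge_zero)
qed





lemma key:
  fixes a b g :: real and u :: complex
  assumes a: "a > 0" and b: "b > 0" and g: "g = a + b" and u: "Im u < 0"
  shows "(\<integral>s. indicator {0<..} s *\<^sub>R (of_real s powr (of_real b - 1) * (of_real s + u) powr (- of_real g)) \<partial>lborel)
         = of_real (Beta a b) * u powr (- of_real a)"
proof -
  define v where "v p = 1 + complex_of_real p * (u - 1)" for p :: real
  define Fi where "Fi w s = indicator {0<..} s *\<^sub>R (complex_of_real s powr (of_real b - 1) * (of_real s + w) powr (- of_real g))" for w :: complex and s :: real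
  define P where "P s p = v p powr of_real a * (complex_of_real s powr (of_real b - 1) * (of_real s + v p) powr (- of_real g))" for s p :: real
  define D where "D s p = - (u - 1) * v p powr (of_real a - 1) * Kd b g (v p) s" for s p :: real
  define H where "H s p = indicator {0<..} s *\<^sub>R (indicator {0..1} p *\<^sub>R D s p)" for s p :: real
  have bg: "b < g" using a g by simp
  have g0: "g > 0" using bg b by simp
  obtain c where c: "c > 0" and hc: "\<And>p s. 0 \<le> p \<Longrightarrow> p \<le> 1 \<Longrightarrow> s \<ge> 0 \<Longrightarrow> c * (1 + s) \<le> norm (of_real s + v p)"
    using segment_bound[OF u] unfolding v_def by blast
  have hv: "of_real s + v p \<notin> \<real>\<^sub>\<le>\<^sub>0" if "0 \<le> p" "p \<le> 1" "s \<ge> 0" for p s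
  proof (cases "p = 0")
    case True
    thus ?thesis using that by (simp add: v_def complex_nonpos_Reals_iff)
  next
    case False
    hence "Im (of_real s + v p) \<noteq> 0" using that u by (simp add: v_def)
    thus ?thesis by (simp add: complex_nonpos_Reals_iff)
  qed
  have v0: "v p \<notin> \<real>\<^sub>\<le>\<^sub>0" if "0 \<le> p" "p \<le> 1" for p
    using hv[OF that order_refl] by simp
  have vnz: "v p \<noteq> 0" if "0 \<le> p" "p \<le> 1" for p
    using v0[OF that] by auto
  define M where "M = 1 + norm (u - 1)"
  have vM: "norm (v p) \<le> M" if "0 \<le> p" "p \<le> 1" for p
    unfolding v_def M_def using segment_ub[OF that] .
  have vc: "c \<le> norm (v p)" if "0 \<le> p" "p \<le> 1" for p
    using hc[OF that order_refl] by simp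
  have vcont: "continuous (at p) v" for p
    unfolding v_def by (intro continuous_intros)
  have derivP: "((P s) has_vector_derivative D s p) (at p within {0..1})"
    if s: "s > 0" and p: "0 \<le> p" "p \<le> 1" for s p
  proof -
    let ?z = "complex_of_real p"
    let ?Sb = "complex_of_real s powr (of_real b - 1)"
    have dA0: "((\<lambda>z. 1 + z * (u - 1)) has_field_derivative (u - 1)) (at ?z)"
      by (auto intro!: derivative_eq_intros)
    have dA1: "((\<lambda>w. w powr of_real a) has_field_derivative (of_real a * v p powr (of_real a - 1))) (at (1 + ?z * (u - 1)))"
      using has_field_derivative_powr[OF v0[OF p]] unfolding v_def .
    have dA: "((\<lambda>z. (1 + z * (u - 1)) powr of_real a) has_field_derivative (of_real a * v p powr (of_real a - 1)) * (u - 1)) (at ?z)"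
      using DERIV_chain'[where f="\<lambda>z. 1 + z * (u - 1)" and g="\<lambda>w. w powr of_real a", OF dA0 dA1] .
    have dB0: "((\<lambda>z. of_real s + (1 + z * (u - 1))) has_field_derivative (u - 1)) (at ?z)"
      by (auto intro!: derivative_eq_intros)
    have dB1: "((\<lambda>w. w powr (- of_real g)) has_field_derivative (- of_real g * (of_real s + v p) powr (- of_real g - 1))) (at (of_real s + (1 + ?z * (u - 1))))"
      using has_field_derivative_powr[OF hv[OF p less_imp_le[OF s]]] unfolding v_def .
    have dB: "((\<lambda>z. (of_real s + (1 + z * (u - 1))) powr (- of_real g)) has_field_derivative (- of_real g * (of_real s + v p) powr (- of_real g - 1)) * (u - 1)) (at ?z)"
      using DERIV_chain'[where f="\<lambda>z. of_real s + (1 + z * (u - 1))" and g="\<lambda>w. w powr (- of_real g)", OF dB0 dB1] .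
    note dm = DERIV_mult[OF dA DERIV_cmult[OF dB, of ?Sb]]
    have eq: "(\<lambda>x. (1 + complex_of_real x * (u - 1)) powr of_real a * (?Sb * (of_real s + (1 + complex_of_real x * (u - 1))) powr (- of_real g))) = P s"
      by (simp add: P_def v_def fun_eq_iff)
    have *: "((P s) has_vector_derivative (of_real a * v p powr (of_real a - 1) * (u - 1) * (?Sb * (of_real s + v p) powr (- of_real g))
         + ?Sb * (- of_real g * (of_real s + v p) powr (- of_real g - 1) * (u - 1)) * v p powr of_real a)) (at p within {0..1})"
      using has_vector_derivative_real_field[OF dm] unfolding eq by (simp add: v_def)
    have sv: "complex_of_real s + v p \<noteq> 0" using hv[OF p less_imp_le[OF s]] by auto
    show ?thesis using * unfolding D_ident[OF vnz[OF p] s sv g] D_def .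
  qed
  have Dcont: "isCont (D s) p" if s: "s > 0" and p: "0 \<le> p" "p \<le> 1" for s p
  proof -
    have f1: "v p \<notin> \<real>\<^sub>\<le>\<^sub>0" "complex_of_real s + v p \<notin> \<real>\<^sub>\<le>\<^sub>0" "complex_of_real s \<notin> \<real>\<^sub>\<le>\<^sub>0"
      using v0[OF p] hv[OF p less_imp_le[OF s]] s by (auto simp: complex_nonpos_Reals_iff)
    have vc': "isCont v p" using vcont[of p] .
    have c1: "isCont (\<lambda>q. v q powr (of_real a - 1)) p"
      by (rule isCont_powr_complex[OF f1(1) vc' continuous_const])
    have sv: "isCont (\<lambda>q. complex_of_real s + v q) p"
      by (rule isCont_add[OF continuous_const vc'])
    have c2: "isCont (\<lambda>q. (complex_of_real s + v q) powr (- of_real g)) p"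
      by (rule isCont_powr_complex[OF _ sv continuous_const]) (use f1 in simp)
    have c3: "isCont (\<lambda>q. (complex_of_real s + v q) powr (- of_real g - 1)) p"
      by (rule isCont_powr_complex[OF _ sv continuous_const]) (use f1 in simp)
    show ?thesis unfolding D_def Kd_def
      by (intro isCont_mult isCont_diff continuous_const c1 c2 c3)
  qed
  have ftc: "(\<integral>p. indicator {0..1} p *\<^sub>R D s p \<partial>lborel) = P s 1 - P s 0" if s: "s > 0" for s
  proof -
    have "(LBINT p=ereal 0..ereal 1. D s p) = P s 1 - P s 0"
    proof (rule interval_integral_FTC_finite)
      show "continuous_on {min 0 1..max 0 1} (D s)"
        by (rule continuous_at_imp_continuous_on) (auto intro!: Dcont s)
      fix p :: real assume "min 0 1 \<le> p" "p \<le> max 0 1"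
      hence p: "0 \<le> p" "p \<le> 1" by auto
      show "(P s has_vector_derivative D s p) (at p within {min 0 1..max 0 1})"
        using derivP[OF s p] by simp
    qed
    thus ?thesis unfolding interval_integral_Icc[of 0 1, OF zero_le_one] set_lebesgue_integral_def .
  qed
  define K where "K = norm (u - 1) * (c powr (a - 1) + M powr (a - 1)) * (b * c powr (-g) + g * c powr (-g - 1))"
  have K0: "K \<ge> 0" unfolding K_def using b g0 by (intro mult_nonneg_nonneg add_nonneg_nonneg) auto
  have Dbound: "norm (D s p) \<le> K * (s powr (b - 1) * (1 + s) powr (-g))"
    if s: "s > 0" and p: "0 \<le> p" "p \<le> 1" for s p
  proof -
    have hcp: "\<And>s. s \<ge> 0 \<Longrightarrow> c * (1 + s) \<le> norm (of_real s + v p)" using hc[OF p] by blast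
    have n1: "norm (v p powr (of_real a - 1)) \<le> c powr (a - 1) + M powr (a - 1)"
    proof -
      have "norm (v p powr (of_real a - 1)) = norm (v p) powr (a - 1)"
        by (subst norm_powr_real_powr') auto
      also have "\<dots> \<le> c powr (a - 1) + M powr (a - 1)"
        by (rule powr_between[OF c vc[OF p] vM[OF p]])
      finally show ?thesis .
    qed
    have n2: "norm (Kd b g (v p) s) \<le> (b * c powr (-g) + g * c powr (-g - 1)) * (s powr (b - 1) * (1 + s) powr (-g))"
      by (rule bound_Kd[OF b bg c hcp s])
    have "norm (D s p) = norm (u - 1) * norm (v p powr (of_real a - 1)) * norm (Kd b g (v p) s)"
      unfolding D_def by (simp add: norm_mult norm_minus_commute)
    also have "\<dots> \<le> norm (u - 1) * (c powr (a - 1) + M powr (a - 1)) * ((b * c powr (-g) + g * c powr (-g - 1)) * (s powr (b - 1) * (1 + s) powr (-g)))"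
      by (intro mult_mono n1 n2 mult_nonneg_nonneg) auto
    finally show ?thesis unfolding K_def by (simp add: mult_ac)
  qed
  have Hmeas: "(\<lambda>(s, p). H s p) \<in> borel_measurable (lborel \<Otimes>\<^sub>M lborel)"
    unfolding H_def D_def Kd_def v_def by measurable
  have Hint: "integrable (lborel \<Otimes>\<^sub>M lborel) (\<lambda>(s, p). H s p)"
  proof (rule Bochner_Integration.integrable_bound)
    show "integrable (lborel \<Otimes>\<^sub>M lborel) (\<lambda>(s, p::real). (K * (indicator {0<..} s * s powr (b - 1) * (1 + s) powr (-g))) * indicator {0..1} p)"
    proof -
      have i1: "integrable lborel (\<lambda>s. K * (indicator {0<..} s * s powr (b - 1) * (1 + s) powr (-g)))"
        by (intro integrable_mult_right int_beta_bound b bg)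
      have i2: "integrable lborel (indicator {0..1} :: real \<Rightarrow> real)"
        by (rule integrable_real_indicator) auto
      have f0: "\<And>s. 0 \<le> K * (indicator {0<..} s * s powr (b - 1) * (1 + s) powr (-g))"
        using K0 by (intro mult_nonneg_nonneg) (auto simp: indicator_def)
      have h0: "\<And>p. 0 \<le> (indicator {0..1} p :: real)" by simp
      show ?thesis using integrable_prod_real[OF i1 i2 f0 h0] by simp
    qed
    show "(\<lambda>(s, p). H s p) \<in> borel_measurable (lborel \<Otimes>\<^sub>M lborel)" by (rule Hmeas)
    show "AE x in lborel \<Otimes>\<^sub>M lborel. norm (case x of (s, p) \<Rightarrow> H s p) \<le>
           norm (case x of (s, p::real) \<Rightarrow> (K * (indicator {0<..} s * s powr (b - 1) * (1 + s) powr (-g))) * indicator {0..1} p)"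
    proof (rule AE_I2, clarify)
      fix s p :: real
      show "norm (H s p) \<le> norm ((K * (indicator {0<..} s * s powr (b - 1) * (1 + s) powr (-g))) * indicator {0..1} p)"
      proof (cases "s > 0 \<and> 0 \<le> p \<and> p \<le> 1")
        case True
        thus ?thesis using Dbound[of s p] K0 by (simp add: H_def abs_mult)
      next
        case False
        thus ?thesis by (auto simp: H_def indicator_def)
      qed
    qed
  qed
  have fub: "(\<integral>p. (\<integral>s. H s p \<partial>lborel) \<partial>lborel) = (\<integral>s. (\<integral>p. H s p \<partial>lborel) \<partial>lborel)"
    using lborel_pair.Fubini_integral[OF Hint] .
  have inner0: "(\<integral>s. H s p \<partial>lborel) = 0" for p
  proof (cases "0 \<le> p \<and> p \<le> 1")
    case True
    hence p: "0 \<le> p" "p \<le> 1" by auto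
    have hcp: "\<And>s. s \<ge> 0 \<Longrightarrow> c * (1 + s) \<le> norm (of_real s + v p)" using hc[OF p] by blast
    have hvp: "\<And>s. s > 0 \<Longrightarrow> of_real s + v p \<notin> \<real>\<^sub>\<le>\<^sub>0" using hv[OF p] by simp
    have "(\<integral>s. H s p \<partial>lborel) = (\<integral>s. (- (u - 1) * v p powr (of_real a - 1)) * (indicator {0<..} s *\<^sub>R Kd b g (v p) s) \<partial>lborel)"
      using p by (intro Bochner_Integration.integral_cong) (auto simp: H_def D_def indicator_def)
    also have "\<dots> = (- (u - 1) * v p powr (of_real a - 1)) * (\<integral>s. indicator {0<..} s *\<^sub>R Kd b g (v p) s \<partial>lborel)"
      by (rule integral_mult_right_zero)
    also have "(\<integral>s. indicator {0<..} s *\<^sub>R Kd b g (v p) s \<partial>lborel) = 0"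
      by (rule Kd_integral_zero[OF b bg c hcp hvp])
    finally show ?thesis by simp
  next
    case False
    hence "indicator {0..1} p = (0::real)" by (auto simp: indicator_def)
    thus ?thesis by (simp add: H_def)
  qed
  have outer: "(\<integral>p. H s p \<partial>lborel) = indicator {0<..} s *\<^sub>R (P s 1 - P s 0)" for s
  proof (cases "s > 0")
    case True
    have "(\<integral>p. H s p \<partial>lborel) = (\<integral>p. indicator {0..1} p *\<^sub>R D s p \<partial>lborel)"
      using True by (simp add: H_def)
    thus ?thesis using ftc[OF True] True by simp
  next
    case False
    thus ?thesis by (simp add: H_def indicator_def)
  qed
  have Fi_int: "integrable lborel (Fi w)" if hw: "\<And>s. s \<ge> 0 \<Longrightarrow> c * (1 + s) \<le> norm (of_real s + w)" for w
  proof (rule Bochner_Integration.integrable_bound)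
    show "integrable lborel (\<lambda>s. c powr (-g) * (indicator {0<..} s * s powr (b - 1) * (1 + s) powr (-g)))"
      by (intro integrable_mult_right int_beta_bound b bg)
    show "Fi w \<in> borel_measurable lborel" unfolding Fi_def by measurable
    show "AE x in lborel. norm (Fi w x) \<le> norm (c powr (-g) * (indicator {0<..} x * x powr (b - 1) * (1 + x) powr (-g)))"
    proof (rule AE_I2)
      fix s :: real
      show "norm (Fi w s) \<le> norm (c powr (-g) * (indicator {0<..} s * s powr (b - 1) * (1 + s) powr (-g)))"
      proof (cases "s > 0")
        case True
        thus ?thesis using bound_P[OF b bg c hw True] by (simp add: Fi_def abs_mult)
      qed (simp add: Fi_def indicator_def)
    qed
  qed
  have v1: "v 1 = u" and v00: "v 0 = 1" by (simp_all add: v_def)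
  have hcu: "\<And>s. s \<ge> 0 \<Longrightarrow> c * (1 + s) \<le> norm (of_real s + u)" using hc[of 1] v1 by simp
  have hc1: "\<And>s. s \<ge> 0 \<Longrightarrow> c * (1 + s) \<le> norm (complex_of_real s + 1)" using hc[of 0] v00 by simp
  have PF: "indicator {0<..} s *\<^sub>R (P s 1 - P s 0) = u powr of_real a * Fi u s - Fi 1 s" for s
    by (simp add: P_def Fi_def v1 v00 indicator_def)
  have "0 = (\<integral>s. (\<integral>p. H s p \<partial>lborel) \<partial>lborel)"
    using fub inner0 by simp
  also have "\<dots> = (\<integral>s. u powr of_real a * Fi u s - Fi 1 s \<partial>lborel)"
    unfolding outer PF ..
  also have "\<dots> = u powr of_real a * (\<integral>s. Fi u s \<partial>lborel) - (\<integral>s. Fi 1 s \<partial>lborel)"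
    using Fi_int[OF hcu] Fi_int[OF hc1] by simp
  finally have main: "u powr of_real a * (\<integral>s. Fi u s \<partial>lborel) = (\<integral>s. Fi 1 s \<partial>lborel)" by simp
  have F1: "(\<integral>s. Fi 1 s \<partial>lborel) = of_real (Beta a b)"
  proof -
    have "(\<integral>s. Fi 1 s \<partial>lborel) = (\<integral>s. complex_of_real (indicator {0<..} s * s powr (b - 1) * (1 + s) powr (-g)) \<partial>lborel)"
    proof (intro Bochner_Integration.integral_cong refl)
      fix s :: real
      show "Fi 1 s = complex_of_real (indicator {0<..} s * s powr (b - 1) * (1 + s) powr (-g))"
      proof (cases "s > 0")
        case True
        have "(complex_of_real (1 + s)) powr (complex_of_real (- g)) = of_real ((1 + s) powr (-g))"
          using True by (intro powr_of_real) simp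
        hence "(complex_of_real s + 1) powr (- of_real g) = of_real ((1 + s) powr (-g))"
          by (simp add: add.commute)
        moreover have "complex_of_real s powr (of_real b - 1) = of_real (s powr (b - 1))"
          using True powr_of_real[of s "b - 1"] by simp
        ultimately show ?thesis using True by (simp add: Fi_def)
      qed (simp add: Fi_def indicator_def)
    qed
    also have "\<dots> = of_real (\<integral>s. indicator {0<..} s * s powr (b - 1) * (1 + s) powr (-g) \<partial>lborel)"
      by (rule integral_complex_of_real)
    also have "(\<integral>s. indicator {0<..} s * s powr (b - 1) * (1 + s) powr (-g) \<partial>lborel) = Beta a b"
    proof -
      have "(\<integral>s. indicator {0<..} s * s powr (b - 1) * (1 + s) powr (-g) \<partial>lborel)
          = enn2real (\<integral>\<^sup>+s. ennreal (indicator {0<..} s * s powr (b - 1) * (1 + s) powr (-g)) \<partial>lborel)"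
        by (rule integral_eq_nn_integral) auto
      also have "(\<integral>\<^sup>+s. ennreal (indicator {0<..} s * s powr (b - 1) * (1 + s) powr (-g)) \<partial>lborel) = ennreal (Beta a b * 1 powr (-a))"
        using beta2_nn[OF a b, of 1] by (simp add: g)
      finally show ?thesis using a b by (simp add: Beta_def Gamma_real_pos less_imp_le)
    qed
    finally show ?thesis .
  qed
  have unz: "u \<noteq> 0" using u by auto
  have fin: "(\<integral>s. Fi u s \<partial>lborel) = of_real (Beta a b) * u powr (- of_real a)"
  proof -
    have "(\<integral>s. Fi u s \<partial>lborel) = u powr (- of_real a) * (u powr of_real a * (\<integral>s. Fi u s \<partial>lborel))"
      using unz by (simp add: powr_add[symmetric])
    also have "\<dots> = u powr (- of_real a) * of_real (Beta a b)" using main F1 by simp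
    finally show ?thesis by (simp add: mult.commute)
  qed
  thus ?thesis unfolding Fi_def .
qed



lemma Mplus_sigma_finite:
  assumes M: "Mplus a \<mu>" and a: "a \<ge> 0"
  shows "sigma_finite_measure \<mu>"
proof
  have sets: "sets \<mu> = sets borel" using M by (simp add: Mplus_def)
  have fin: "(\<integral>\<^sup>+ t. ennreal ((1 + \<bar>t\<bar>) powr (-a)) \<partial>\<mu>) < \<infinity>" using M by (simp add: Mplus_def)
  have space: "space \<mu> = UNIV" using sets_eq_imp_space_eq[OF sets] by simp
  show "\<exists>A. countable A \<and> A \<subseteq> sets \<mu> \<and> \<Union> A = space \<mu> \<and> (\<forall>a\<in>A. emeasure \<mu> a \<noteq> \<infinity>)"
  proof (intro exI[of _ "range (\<lambda>n::nat. {- real n..real n})"] conjI ballI)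
    show "countable (range (\<lambda>n::nat. {- real n..real n}))" by simp
    show "range (\<lambda>n::nat. {- real n..real n}) \<subseteq> sets \<mu>" unfolding sets by (intro image_subsetI) simp
    show "\<Union> (range (\<lambda>n::nat. {- real n..real n})) = space \<mu>"
    proof -
      have "x \<in> \<Union> (range (\<lambda>n::nat. {- real n..real n}))" for x :: real
      proof -
        obtain n :: nat where "\<bar>x\<bar> \<le> real n" using real_arch_simple by blast
        hence "x \<in> {- real n..real n}" by auto
        thus ?thesis by blast
      qed
      thus ?thesis unfolding space by blast
    qed
    fix A assume "A \<in> range (\<lambda>n::nat. {- real n..real n})"
    then obtain n :: nat where A: "A = {- real n..real n}" by auto
    have "emeasure \<mu> A = (\<integral>\<^sup>+ t. indicator A t \<partial>\<mu>)"
      unfolding A by (intro nn_integral_indicator[symmetric]) (simp add: sets)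
    also have "\<dots> \<le> (\<integral>\<^sup>+ t. ennreal ((1 + real n) powr a) * ennreal ((1 + \<bar>t\<bar>) powr (-a)) \<partial>\<mu>)"
    proof (intro nn_integral_mono)
      fix t :: real
      show "indicator A t \<le> ennreal ((1 + real n) powr a) * ennreal ((1 + \<bar>t\<bar>) powr (-a))"
      proof (cases "t \<in> A")
        case True
        hence "\<bar>t\<bar> \<le> real n" using A by auto
        hence "(1 + \<bar>t\<bar>) powr a \<le> (1 + real n) powr a" using a by (intro powr_mono2) auto
        moreover have "(1 + \<bar>t\<bar>) powr a > 0" by simp
        ultimately have "1 \<le> (1 + real n) powr a / (1 + \<bar>t\<bar>) powr a"
          by (simp add: le_divide_eq)
        hence "1 \<le> (1 + real n) powr a * (1 + \<bar>t\<bar>) powr (-a)"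
          by (simp add: powr_minus divide_inverse)
        hence "ennreal 1 \<le> ennreal ((1 + real n) powr a * (1 + \<bar>t\<bar>) powr (-a))"
          by (rule ennreal_leI)
        thus ?thesis using True by (simp add: ennreal_mult')
      qed simp
    qed
    also have "\<dots> = ennreal ((1 + real n) powr a) * (\<integral>\<^sup>+ t. ennreal ((1 + \<bar>t\<bar>) powr (-a)) \<partial>\<mu>)"
      by (rule nn_integral_cmult) (simp add: measurable_cong_sets[OF sets refl])
    also have "\<dots> < \<infinity>" using fin by (simp add: ennreal_mult_less_top)
    finally show "emeasure \<mu> A \<noteq> \<infinity>" by simp
  qed
qed

lemma branch_powr:
  fixes x :: complex and c :: real
  assumes x: "Im x > 0"
  shows "x powr (- of_real c) = exp (- \<i> * of_real (pi * c)) * (- x) powr (- of_real c)"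
proof -
  have x0: "x \<noteq> 0" using x by auto
  have "Ln (- x) = Ln x - \<i> * pi" using Ln_minus[OF x0] x by auto
  hence L: "Ln x = Ln (- x) + \<i> * pi" by simp
  show ?thesis using x0
    by (simp add: powr_def L exp_add[symmetric] algebra_simps)
qed

definition hR :: "real \<Rightarrow> real \<Rightarrow> real \<Rightarrow> real" where
  "hR b \<tau> t = (if \<tau> < t \<and> t \<le> 0 then (t - \<tau>) powr (b - 1) else 0)"

lemma hR_nonneg: "hR b \<tau> t \<ge> 0" by (simp add: hR_def)

lemma hR_meas[measurable]: "(\<lambda>(\<tau>, t). hR b \<tau> t) \<in> borel_measurable (borel \<Otimes>\<^sub>M borel)"
  unfolding hR_def by measurable

lemma inner_nn:
  fixes a b t :: real assumes a: "a > 0" and b: "b > 0" and t: "t \<le> 0"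
  shows "(\<integral>\<^sup>+ \<tau>. ennreal (hR b \<tau> t * (1 + \<bar>\<tau>\<bar>) powr (-(a + b))) \<partial>lborel) = ennreal (Beta a b * (1 + \<bar>t\<bar>) powr (-a))"
proof -
  have m: "(\<lambda>\<tau>. ennreal (hR b \<tau> t * (1 + \<bar>\<tau>\<bar>) powr (-(a + b)))) \<in> borel_measurable borel"
    unfolding hR_def by measurable
  have "(\<integral>\<^sup>+ \<tau>. ennreal (hR b \<tau> t * (1 + \<bar>\<tau>\<bar>) powr (-(a + b))) \<partial>lborel)
      = ennreal \<bar>-1\<bar> * (\<integral>\<^sup>+ x. ennreal (hR b (t + (-1) * x) t * (1 + \<bar>t + (-1) * x\<bar>) powr (-(a + b))) \<partial>lborel)"
    by (rule nn_integral_real_affine[OF m]) simp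
  also have "\<dots> = (\<integral>\<^sup>+ x. ennreal (indicator {0<..} x * x powr (b - 1) * ((1 + \<bar>t\<bar>) + x) powr (-(a + b))) \<partial>lborel)"
  proof (simp, intro nn_integral_cong)
    fix x :: real
    show "ennreal (hR b (t - x) t * (1 + \<bar>t - x\<bar>) powr (-a - b)) = ennreal (indicator {0<..} x * x powr (b - 1) * (1 + \<bar>t\<bar> + x) powr (-a - b))"
    proof (cases "x > 0")
      case True
      have "1 + \<bar>t - x\<bar> = 1 + \<bar>t\<bar> + x" using True t by simp
      thus ?thesis using True t by (simp only: hR_def) simp
    qed (simp add: hR_def)
  qed
  also have "\<dots> = ennreal (Beta a b * (1 + \<bar>t\<bar>) powr (-a))"
    by (rule beta2_nn[OF a b]) simp
  finally show ?thesis .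
qed



theorem proposition7p14:
  fixes \<alpha> \<beta> :: real and \<nu>1 :: "real measure"
  assumes "\<alpha> > 0" and "Mplus \<alpha> \<nu>1"
    and "emeasure \<nu>1 {0<..} = 0"
    and "\<beta> > 0"
  shows "Mplus (\<alpha> + \<beta>) (nu2 \<alpha> \<beta> \<nu>1) \<and>
    (\<forall>z. Im z > 0 \<longrightarrow>
       Ctrans \<alpha> \<nu>1 z = exp (\<i> * complex_of_real (pi * \<beta>)) * Ctrans (\<alpha> + \<beta>) (nu2 \<alpha> \<beta> \<nu>1) z)"
proof -
  have a: "\<alpha> > 0" and b: "\<beta> > 0" using assms by auto
  define Bt where "Bt = Beta \<alpha> \<beta>"
  have Bt: "Bt > 0" unfolding Bt_def Beta_def using a b by (simp add: Gamma_real_pos)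
  have sets1: "sets \<nu>1 = sets borel" using assms(2) by (simp add: Mplus_def)
  have fin1: "(\<integral>\<^sup>+ t. ennreal ((1 + \<bar>t\<bar>) powr (-\<alpha>)) \<partial>\<nu>1) < \<infinity>" using assms(2) by (simp add: Mplus_def)
  interpret s1: sigma_finite_measure \<nu>1 by (rule Mplus_sigma_finite[OF assms(2)]) (use a in simp)
  interpret P: pair_sigma_finite lborel \<nu>1 ..
  have sets_pair: "sets (lborel \<Otimes>\<^sub>M \<nu>1) = sets (borel \<Otimes>\<^sub>M borel)"
    by (rule sets_pair_measure_cong[OF sets_lborel sets1])
  have AEneg: "AE t in \<nu>1. t \<le> 0"
  proof -
    have "{x \<in> space \<nu>1. \<not> x \<le> 0} = {0<..}"
      using sets_eq_imp_space_eq[OF sets1] by auto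
    thus ?thesis using assms(3) sets1 by (subst AE_iff_measurable[of "{0<..}"]) auto
  qed
  have hRm: "(\<lambda>(\<tau>, t). hR \<beta> \<tau> t) \<in> borel_measurable (lborel \<Otimes>\<^sub>M \<nu>1)"
    using hR_meas measurable_cong_sets[OF sets_pair refl] by blast
  define gE where "gE \<tau> = ennreal (1 / Bt) * (\<integral>\<^sup>+ t. ennreal (hR \<beta> \<tau> t) \<partial>\<nu>1)" for \<tau>
  have nu2eq: "nu2 \<alpha> \<beta> \<nu>1 = density lborel gE"
  proof -
    have "(\<lambda>\<tau>. ennreal (1 / Beta \<alpha> \<beta>) * (\<integral>\<^sup>+ t. indicator {\<tau><..0} t * ennreal ((t - \<tau>) powr (\<beta> - 1)) \<partial>\<nu>1)) = gE"
      unfolding gE_def Bt_def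
      by (intro ext arg_cong2[where f="(*)"] refl nn_integral_cong) (auto simp: hR_def indicator_def)
    thus ?thesis unfolding nu2_def by simp
  qed
  have gEm: "gE \<in> borel_measurable lborel"
  proof -
    have "(\<lambda>\<tau>. \<integral>\<^sup>+ t. ennreal (hR \<beta> \<tau> t) \<partial>\<nu>1) \<in> borel_measurable lborel"
      by (rule s1.borel_measurable_nn_integral) (use hRm in measurable)
    thus ?thesis unfolding gE_def by measurable
  qed
  have TT: "(\<integral>\<^sup>+ \<tau>. \<integral>\<^sup>+ t. ennreal (hR \<beta> \<tau> t * (1 + \<bar>\<tau>\<bar>) powr (-(\<alpha> + \<beta>))) \<partial>\<nu>1 \<partial>lborel)
      = (\<integral>\<^sup>+ t. ennreal (indicator {..0} t * (Bt * (1 + \<bar>t\<bar>) powr (-\<alpha>))) \<partial>\<nu>1)"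
  proof -
    have m: "(\<lambda>(\<tau>, t). ennreal (hR \<beta> \<tau> t * (1 + \<bar>\<tau>\<bar>) powr (-(\<alpha> + \<beta>)))) \<in> borel_measurable (lborel \<Otimes>\<^sub>M \<nu>1)"
    proof -
      have "(\<lambda>(\<tau>, t). ennreal (hR \<beta> \<tau> t * (1 + \<bar>\<tau>\<bar>) powr (-(\<alpha> + \<beta>)))) \<in> borel_measurable (borel \<Otimes>\<^sub>M borel)"
        by measurable
      thus ?thesis using measurable_cong_sets[OF sets_pair refl] by blast
    qed
    have "(\<integral>\<^sup>+ \<tau>. \<integral>\<^sup>+ t. ennreal (hR \<beta> \<tau> t * (1 + \<bar>\<tau>\<bar>) powr (-(\<alpha> + \<beta>))) \<partial>\<nu>1 \<partial>lborel)
        = (\<integral>\<^sup>+ t. \<integral>\<^sup>+ \<tau>. ennreal (hR \<beta> \<tau> t * (1 + \<bar>\<tau>\<bar>) powr (-(\<alpha> + \<beta>))) \<partial>lborel \<partial>\<nu>1)"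
      using P.Fubini'[OF m] by simp
    also have "\<dots> = (\<integral>\<^sup>+ t. ennreal (indicator {..0} t * (Bt * (1 + \<bar>t\<bar>) powr (-\<alpha>))) \<partial>\<nu>1)"
    proof (intro nn_integral_cong)
      fix t :: real
      show "(\<integral>\<^sup>+ \<tau>. ennreal (hR \<beta> \<tau> t * (1 + \<bar>\<tau>\<bar>) powr (-(\<alpha> + \<beta>))) \<partial>lborel) = ennreal (indicator {..0} t * (Bt * (1 + \<bar>t\<bar>) powr (-\<alpha>)))"
      proof (cases "t \<le> 0")
        case True
        thus ?thesis using inner_nn[OF a b True] by (simp add: Bt_def)
      next
        case False
        thus ?thesis by (simp add: hR_def)
      qed
    qed
    finally show ?thesis .
  qed
  have fin2: "(\<integral>\<^sup>+ t. ennreal (indicator {..0} t * (Bt * (1 + \<bar>t\<bar>) powr (-\<alpha>))) \<partial>\<nu>1) < \<infinity>"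
  proof -
    have "(\<integral>\<^sup>+ t. ennreal (indicator {..0} t * (Bt * (1 + \<bar>t\<bar>) powr (-\<alpha>))) \<partial>\<nu>1)
        \<le> (\<integral>\<^sup>+ t. ennreal Bt * ennreal ((1 + \<bar>t\<bar>) powr (-\<alpha>)) \<partial>\<nu>1)"
      using Bt by (intro nn_integral_mono) (auto simp: indicator_def ennreal_mult'[symmetric])
    also have "\<dots> = ennreal Bt * (\<integral>\<^sup>+ t. ennreal ((1 + \<bar>t\<bar>) powr (-\<alpha>)) \<partial>\<nu>1)"
      by (rule nn_integral_cmult) (simp add: measurable_cong_sets[OF sets1 refl])
    also have "\<dots> < \<infinity>" using fin1 by (simp add: ennreal_mult_less_top)
    finally show ?thesis .
  qed
  have part1int: "(\<integral>\<^sup>+ \<tau>. gE \<tau> * ennreal ((1 + \<bar>\<tau>\<bar>) powr (-(\<alpha> + \<beta>))) \<partial>lborel) < \<infinity>"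
  proof -
    have "(\<integral>\<^sup>+ \<tau>. gE \<tau> * ennreal ((1 + \<bar>\<tau>\<bar>) powr (-(\<alpha> + \<beta>))) \<partial>lborel)
        = (\<integral>\<^sup>+ \<tau>. ennreal (1 / Bt) * (\<integral>\<^sup>+ t. ennreal (hR \<beta> \<tau> t * (1 + \<bar>\<tau>\<bar>) powr (-(\<alpha> + \<beta>))) \<partial>\<nu>1) \<partial>lborel)"
    proof (intro nn_integral_cong)
      fix \<tau> :: real
      have "(\<integral>\<^sup>+ t. ennreal (hR \<beta> \<tau> t) \<partial>\<nu>1) * ennreal ((1 + \<bar>\<tau>\<bar>) powr (-(\<alpha> + \<beta>)))
          = (\<integral>\<^sup>+ t. ennreal (hR \<beta> \<tau> t) * ennreal ((1 + \<bar>\<tau>\<bar>) powr (-(\<alpha> + \<beta>))) \<partial>\<nu>1)"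
        by (rule nn_integral_multc[symmetric]) (use hRm in \<open>simp add: measurable_cong_sets[OF sets1 refl]\<close>)
      also have "\<dots> = (\<integral>\<^sup>+ t. ennreal (hR \<beta> \<tau> t * (1 + \<bar>\<tau>\<bar>) powr (-(\<alpha> + \<beta>))) \<partial>\<nu>1)"
        by (intro nn_integral_cong) (simp add: ennreal_mult' hR_nonneg)
      finally show "gE \<tau> * ennreal ((1 + \<bar>\<tau>\<bar>) powr (-(\<alpha> + \<beta>))) = ennreal (1 / Bt) * (\<integral>\<^sup>+ t. ennreal (hR \<beta> \<tau> t * (1 + \<bar>\<tau>\<bar>) powr (-(\<alpha> + \<beta>))) \<partial>\<nu>1)"
        unfolding gE_def by (simp add: mult.assoc)
    qed
    also have "\<dots> = ennreal (1 / Bt) * (\<integral>\<^sup>+ \<tau>. \<integral>\<^sup>+ t. ennreal (hR \<beta> \<tau> t * (1 + \<bar>\<tau>\<bar>) powr (-(\<alpha> + \<beta>))) \<partial>\<nu>1 \<partial>lborel)"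
    proof (rule nn_integral_cmult)
      have "(\<lambda>(\<tau>, t). ennreal (hR \<beta> \<tau> t * (1 + \<bar>\<tau>\<bar>) powr (-(\<alpha> + \<beta>)))) \<in> borel_measurable (lborel \<Otimes>\<^sub>M \<nu>1)"
        using hRm by measurable
      thus "(\<lambda>\<tau>. \<integral>\<^sup>+ t. ennreal (hR \<beta> \<tau> t * (1 + \<bar>\<tau>\<bar>) powr (-(\<alpha> + \<beta>))) \<partial>\<nu>1) \<in> borel_measurable lborel"
        by (rule s1.borel_measurable_nn_integral)
    qed
    also have "\<dots> < \<infinity>" unfolding TT using fin2 by (simp add: ennreal_mult_less_top)
    finally show ?thesis .
  qed
  have part1: "Mplus (\<alpha> + \<beta>) (nu2 \<alpha> \<beta> \<nu>1)"
  proof -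
    have "(\<integral>\<^sup>+ t. ennreal ((1 + \<bar>t\<bar>) powr (-(\<alpha> + \<beta>))) \<partial>density lborel gE)
        = (\<integral>\<^sup>+ \<tau>. gE \<tau> * ennreal ((1 + \<bar>\<tau>\<bar>) powr (-(\<alpha> + \<beta>))) \<partial>lborel)"
      by (rule nn_integral_density[OF gEm]) measurable
    thus ?thesis using part1int unfolding Mplus_def nu2eq by simp
  qed
  have meas1: "\<And>f. f \<in> borel_measurable \<nu>1 \<longleftrightarrow> f \<in> borel_measurable borel"
    using measurable_cong_sets[OF sets1 refl] by blast
  have measP: "\<And>f. f \<in> borel_measurable (lborel \<Otimes>\<^sub>M \<nu>1) \<longleftrightarrow> f \<in> borel_measurable (borel \<Otimes>\<^sub>M borel)"
    using measurable_cong_sets[OF sets_pair refl] by blast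
  have part2: "Ctrans \<alpha> \<nu>1 z = exp (\<i> * complex_of_real (pi * \<beta>)) * Ctrans (\<alpha> + \<beta>) (nu2 \<alpha> \<beta> \<nu>1) z"
    if z: "Im z > 0" for z
  proof -
    obtain c where c: "c > 0" and hcz: "\<And>t. c * (1 + \<bar>t\<bar>) \<le> norm (z + of_real t)"
      using halfplane_bound[OF z] by blast
    define w where "w \<tau> = 1 / ((z + complex_of_real \<tau>) powr complex_of_real (\<alpha> + \<beta>))" for \<tau> :: real
    define gR where "gR \<tau> = (1 / Bt) * (\<integral> t. hR \<beta> \<tau> t \<partial>\<nu>1)" for \<tau> :: real
    define Hc where "Hc \<tau> t = complex_of_real (hR \<beta> \<tau> t) * w \<tau>" for \<tau> t :: real
    define E where "E = exp (- \<i> * complex_of_real (pi * \<beta>))"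
    have hRt: "(\<lambda>t. hR \<beta> \<tau> t) \<in> borel_measurable \<nu>1" for \<tau>
      unfolding meas1 hR_def by measurable
    have AEfin: "AE \<tau> in lborel. gE \<tau> \<noteq> \<infinity>"
    proof -
      have "AE \<tau> in lborel. gE \<tau> * ennreal ((1 + \<bar>\<tau>\<bar>) powr (-(\<alpha> + \<beta>))) \<noteq> \<infinity>"
        by (rule nn_integral_PInf_AE) (use part1int gEm in auto)
      thus ?thesis by (auto simp: ennreal_mult_eq_top_iff elim!: eventually_mono)
    qed
    have gR_meas: "gR \<in> borel_measurable lborel"
    proof -
      have "(\<lambda>\<tau>. \<integral> t. hR \<beta> \<tau> t \<partial>\<nu>1) \<in> borel_measurable lborel"
        by (rule s1.borel_measurable_lebesgue_integral) (use hRm in simp)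
      thus ?thesis unfolding gR_def by measurable
    qed
    have gR_nonneg: "gR \<tau> \<ge> 0" for \<tau>
    proof -
      have "(\<integral> t. hR \<beta> \<tau> t \<partial>\<nu>1) \<ge> 0" by (intro Bochner_Integration.integral_nonneg hR_nonneg)
      thus ?thesis unfolding gR_def using Bt by simp
    qed
    have dens: "density lborel gE = density lborel (\<lambda>\<tau>. ennreal (gR \<tau>))"
    proof (rule density_cong[OF gEm])
      show "(\<lambda>\<tau>. ennreal (gR \<tau>)) \<in> borel_measurable lborel" using gR_meas by measurable
      show "AE \<tau> in lborel. gE \<tau> = ennreal (gR \<tau>)"
        using AEfin
      proof (eventually_elim)
        fix \<tau> assume fin: "gE \<tau> \<noteq> \<infinity>"
        have fin': "(\<integral>\<^sup>+ t. ennreal (hR \<beta> \<tau> t) \<partial>\<nu>1) \<noteq> \<infinity>"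
          using fin Bt by (auto simp: gE_def ennreal_mult_eq_top_iff)
        have "(\<integral> t. hR \<beta> \<tau> t \<partial>\<nu>1) = enn2real (\<integral>\<^sup>+ t. ennreal (hR \<beta> \<tau> t) \<partial>\<nu>1)"
          by (rule integral_eq_nn_integral[OF hRt]) (simp add: hR_nonneg)
        hence "ennreal (\<integral> t. hR \<beta> \<tau> t \<partial>\<nu>1) = (\<integral>\<^sup>+ t. ennreal (hR \<beta> \<tau> t) \<partial>\<nu>1)"
          using fin' by (simp add: less_top[symmetric])
        moreover have "ennreal ((1 / Bt) * (\<integral> t. hR \<beta> \<tau> t \<partial>\<nu>1)) = ennreal (1 / Bt) * ennreal (\<integral> t. hR \<beta> \<tau> t \<partial>\<nu>1)"
          using Bt by (intro ennreal_mult') simp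
        ultimately show "gE \<tau> = ennreal (gR \<tau>)"
          unfolding gE_def gR_def by simp
      qed
    qed
    have wm: "w \<in> borel_measurable borel" unfolding w_def by measurable
    have C2: "Ctrans (\<alpha> + \<beta>) (nu2 \<alpha> \<beta> \<nu>1) z = (\<integral> \<tau>. gR \<tau> *\<^sub>R w \<tau> \<partial>lborel)"
      unfolding Ctrans_def nu2eq dens w_def
      by (rule integral_density) (use gR_meas gR_nonneg in auto)
    have C3: "(\<integral> \<tau>. gR \<tau> *\<^sub>R w \<tau> \<partial>lborel) = of_real (1 / Bt) * (\<integral> \<tau>. (\<integral> t. Hc \<tau> t \<partial>\<nu>1) \<partial>lborel)"
    proof -
      have "gR \<tau> *\<^sub>R w \<tau> = of_real (1 / Bt) * (\<integral> t. Hc \<tau> t \<partial>\<nu>1)" for \<tau>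
      proof -
        have "(\<integral> t. Hc \<tau> t \<partial>\<nu>1) = (\<integral> t. complex_of_real (hR \<beta> \<tau> t) \<partial>\<nu>1) * w \<tau>"
          unfolding Hc_def by (rule integral_mult_left_zero)
        also have "(\<integral> t. complex_of_real (hR \<beta> \<tau> t) \<partial>\<nu>1) = of_real (\<integral> t. hR \<beta> \<tau> t \<partial>\<nu>1)"
          by (rule integral_complex_of_real)
        finally show ?thesis unfolding gR_def by (simp add: scaleR_conv_of_real)
      qed
      hence "(\<integral> \<tau>. gR \<tau> *\<^sub>R w \<tau> \<partial>lborel) = (\<integral> \<tau>. of_real (1 / Bt) * (\<integral> t. Hc \<tau> t \<partial>\<nu>1) \<partial>lborel)"
        by simp
      also have "\<dots> = of_real (1 / Bt) * (\<integral> \<tau>. (\<integral> t. Hc \<tau> t \<partial>\<nu>1) \<partial>lborel)"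
        by (rule integral_mult_right_zero)
      finally show ?thesis .
    qed
    have Hcm: "(\<lambda>(\<tau>, t). Hc \<tau> t) \<in> borel_measurable (lborel \<Otimes>\<^sub>M \<nu>1)"
      unfolding measP Hc_def w_def hR_def by measurable
    have normHc: "norm (Hc \<tau> t) \<le> c powr (-(\<alpha> + \<beta>)) * (hR \<beta> \<tau> t * (1 + \<bar>\<tau>\<bar>) powr (-(\<alpha> + \<beta>)))" for \<tau> t
    proof -
      have "norm (w \<tau>) = norm ((z + complex_of_real \<tau>) powr (- complex_of_real (\<alpha> + \<beta>)))"
        unfolding w_def by (simp only: powr_minus_divide)
      also have "\<dots> \<le> c powr (-(\<alpha> + \<beta>)) * (1 + \<bar>\<tau>\<bar>) powr (-(\<alpha> + \<beta>))"
        by (rule norm_powr_neg_bound[OF c _ _ hcz]) (use a b in auto)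
      finally have "norm (w \<tau>) \<le> c powr (-(\<alpha> + \<beta>)) * (1 + \<bar>\<tau>\<bar>) powr (-(\<alpha> + \<beta>))" .
      hence "hR \<beta> \<tau> t * norm (w \<tau>) \<le> hR \<beta> \<tau> t * (c powr (-(\<alpha> + \<beta>)) * (1 + \<bar>\<tau>\<bar>) powr (-(\<alpha> + \<beta>)))"
        by (intro mult_left_mono hR_nonneg)
      thus ?thesis unfolding Hc_def by (simp add: norm_mult hR_nonneg mult_ac)
    qed
    have Hint: "integrable (lborel \<Otimes>\<^sub>M \<nu>1) (\<lambda>(\<tau>, t). Hc \<tau> t)"
    proof (rule integrableI_bounded[OF Hcm])
      have mm: "(\<lambda>(\<tau>, t). ennreal (hR \<beta> \<tau> t * (1 + \<bar>\<tau>\<bar>) powr (-(\<alpha> + \<beta>)))) \<in> borel_measurable (lborel \<Otimes>\<^sub>M \<nu>1)"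
        unfolding measP by measurable
      have "(\<integral>\<^sup>+ x. ennreal (norm (case x of (\<tau>, t) \<Rightarrow> Hc \<tau> t)) \<partial>(lborel \<Otimes>\<^sub>M \<nu>1))
          \<le> (\<integral>\<^sup>+ x. ennreal (c powr (-(\<alpha> + \<beta>))) * (case x of (\<tau>, t) \<Rightarrow> ennreal (hR \<beta> \<tau> t * (1 + \<bar>\<tau>\<bar>) powr (-(\<alpha> + \<beta>)))) \<partial>(lborel \<Otimes>\<^sub>M \<nu>1))"
      proof (intro nn_integral_mono, clarify)
        fix \<tau> t :: real
        show "ennreal (norm (Hc \<tau> t)) \<le> ennreal (c powr (-(\<alpha> + \<beta>))) * ennreal (hR \<beta> \<tau> t * (1 + \<bar>\<tau>\<bar>) powr (-(\<alpha> + \<beta>)))"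
          using normHc[of \<tau> t] by (simp add: ennreal_mult'[symmetric] ennreal_leI)
      qed
      also have "\<dots> = ennreal (c powr (-(\<alpha> + \<beta>))) * (\<integral>\<^sup>+ x. (case x of (\<tau>, t) \<Rightarrow> ennreal (hR \<beta> \<tau> t * (1 + \<bar>\<tau>\<bar>) powr (-(\<alpha> + \<beta>)))) \<partial>(lborel \<Otimes>\<^sub>M \<nu>1))"
        by (rule nn_integral_cmult) (rule mm)
      also have "(\<integral>\<^sup>+ x. (case x of (\<tau>, t) \<Rightarrow> ennreal (hR \<beta> \<tau> t * (1 + \<bar>\<tau>\<bar>) powr (-(\<alpha> + \<beta>)))) \<partial>(lborel \<Otimes>\<^sub>M \<nu>1))
          = (\<integral>\<^sup>+ \<tau>. \<integral>\<^sup>+ t. ennreal (hR \<beta> \<tau> t * (1 + \<bar>\<tau>\<bar>) powr (-(\<alpha> + \<beta>))) \<partial>\<nu>1 \<partial>lborel)"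
        using s1.nn_integral_fst[OF mm] by simp
      also have "ennreal (c powr (-(\<alpha> + \<beta>))) * \<dots> < \<infinity>"
        unfolding TT using fin2 by (simp add: ennreal_mult_less_top)
      finally show "(\<integral>\<^sup>+ x. ennreal (norm (case x of (\<tau>, t) \<Rightarrow> Hc \<tau> t)) \<partial>(lborel \<Otimes>\<^sub>M \<nu>1)) < \<infinity>" .
    qed
    have fub: "(\<integral> \<tau>. (\<integral> t. Hc \<tau> t \<partial>\<nu>1) \<partial>lborel) = (\<integral> t. (\<integral> \<tau>. Hc \<tau> t \<partial>lborel) \<partial>\<nu>1)"
      using P.Fubini_integral[OF Hint] by simp
    have inner: "(\<integral> \<tau>. Hc \<tau> t \<partial>lborel) = E * of_real Bt * (1 / ((z + of_real t) powr of_real \<alpha>))"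
      if t: "t \<le> 0" for t
    proof -
      define u where "u = - (z + complex_of_real t)"
      have u: "Im u < 0" using z by (simp add: u_def)
      define E0 where "E0 = exp (- \<i> * complex_of_real (pi * (\<alpha> + \<beta>)))"
      have "(\<integral> \<tau>. Hc \<tau> t \<partial>lborel) = \<bar>- 1 :: real\<bar> *\<^sub>R (\<integral> x. Hc (t + (- 1) * x) t \<partial>lborel)"
        by (rule lborel_integral_real_affine) simp
      also have "\<dots> = (\<integral> x. E0 * (indicator {0<..} x *\<^sub>R (of_real x powr (of_real \<beta> - 1) * (of_real x + u) powr (- complex_of_real (\<alpha> + \<beta>)))) \<partial>lborel)"
      proof (simp only: abs_minus_cancel abs_one scaleR_one, intro Bochner_Integration.integral_cong refl)
        fix x :: real
        show "Hc (t + (- 1) * x) t = E0 * (indicator {0<..} x *\<^sub>R (of_real x powr (of_real \<beta> - 1) * (of_real x + u) powr (- complex_of_real (\<alpha> + \<beta>))))"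
        proof (cases "x > 0")
          case True
          have h: "hR \<beta> (t + (- 1) * x) t = x powr (\<beta> - 1)" using True t by (simp add: hR_def)
          have p1: "complex_of_real (x powr (\<beta> - 1)) = of_real x powr (of_real \<beta> - 1)"
            using True powr_of_real[of x "\<beta> - 1"] by simp
          have Imx: "Im (z + complex_of_real (t + (- 1) * x)) > 0" using z by simp
          have "w (t + (- 1) * x) = (z + complex_of_real (t + (- 1) * x)) powr (- complex_of_real (\<alpha> + \<beta>))"
            unfolding w_def by (simp only: powr_minus_divide)
          also have "\<dots> = E0 * (- (z + complex_of_real (t + (- 1) * x))) powr (- complex_of_real (\<alpha> + \<beta>))"
            unfolding E0_def by (rule branch_powr[OF Imx])
          also have "- (z + complex_of_real (t + (- 1) * x)) = of_real x + u"
            unfolding u_def by simp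
          finally have "w (t + (- 1) * x) = E0 * (of_real x + u) powr (- complex_of_real (\<alpha> + \<beta>))" .
          thus ?thesis using True unfolding Hc_def h p1 by simp
        next
          case False
          thus ?thesis by (simp add: Hc_def hR_def)
        qed
      qed
      also have "\<dots> = E0 * (\<integral> x. indicator {0<..} x *\<^sub>R (of_real x powr (of_real \<beta> - 1) * (of_real x + u) powr (- complex_of_real (\<alpha> + \<beta>))) \<partial>lborel)"
        by (rule integral_mult_right_zero)
      also have "(\<integral> x. indicator {0<..} x *\<^sub>R (of_real x powr (of_real \<beta> - 1) * (of_real x + u) powr (- complex_of_real (\<alpha> + \<beta>))) \<partial>lborel)
          = of_real (Beta \<alpha> \<beta>) * u powr (- of_real \<alpha>)"
        by (rule key[OF a b refl u])
      also have "u powr (- of_real \<alpha>) = exp (\<i> * complex_of_real (pi * \<alpha>)) * (z + of_real t) powr (- of_real \<alpha>)"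
      proof -
        have Imzt: "Im (z + complex_of_real t) > 0" using z by simp
        have "(z + of_real t) powr (- of_real \<alpha>) = exp (- \<i> * complex_of_real (pi * \<alpha>)) * u powr (- of_real \<alpha>)"
          unfolding u_def by (rule branch_powr[OF Imzt])
        hence "exp (\<i> * complex_of_real (pi * \<alpha>)) * (z + of_real t) powr (- of_real \<alpha>)
            = (exp (\<i> * complex_of_real (pi * \<alpha>)) * exp (- \<i> * complex_of_real (pi * \<alpha>))) * u powr (- of_real \<alpha>)"
          by (simp add: mult.assoc)
        also have "exp (\<i> * complex_of_real (pi * \<alpha>)) * exp (- \<i> * complex_of_real (pi * \<alpha>)) = 1"
          by (simp add: exp_add[symmetric])
        finally show ?thesis by simp
      qed
      also have "E0 * (of_real (Beta \<alpha> \<beta>) * (exp (\<i> * complex_of_real (pi * \<alpha>)) * (z + of_real t) powr (- of_real \<alpha>)))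
          = (E0 * exp (\<i> * complex_of_real (pi * \<alpha>))) * of_real Bt * (z + of_real t) powr (- of_real \<alpha>)"
        by (simp add: Bt_def mult_ac)
      also have "E0 * exp (\<i> * complex_of_real (pi * \<alpha>)) = E"
        unfolding E0_def E_def by (simp add: exp_add[symmetric] algebra_simps)
      also have "(z + of_real t) powr (- of_real \<alpha>) = 1 / ((z + of_real t) powr of_real \<alpha>)"
        by (rule powr_minus_divide)
      finally show ?thesis .
    qed
    have outer: "(\<integral> t. (\<integral> \<tau>. Hc \<tau> t \<partial>lborel) \<partial>\<nu>1) = E * of_real Bt * Ctrans \<alpha> \<nu>1 z"
    proof -
      have "(\<integral> t. (\<integral> \<tau>. Hc \<tau> t \<partial>lborel) \<partial>\<nu>1)
          = (\<integral> t. (if t \<le> 0 then E * of_real Bt * (1 / ((z + of_real t) powr of_real \<alpha>)) else 0) \<partial>\<nu>1)"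
      proof (intro Bochner_Integration.integral_cong refl)
        fix t :: real
        show "(\<integral> \<tau>. Hc \<tau> t \<partial>lborel) = (if t \<le> 0 then E * of_real Bt * (1 / ((z + of_real t) powr of_real \<alpha>)) else 0)"
          using inner[of t] by (auto simp: Hc_def hR_def)
      qed
      also have "\<dots> = (\<integral> t. E * of_real Bt * (1 / ((z + of_real t) powr of_real \<alpha>)) \<partial>\<nu>1)"
      proof (rule integral_cong_AE)
        show "(\<lambda>t. if t \<le> 0 then E * of_real Bt * (1 / ((z + of_real t) powr of_real \<alpha>)) else 0) \<in> borel_measurable \<nu>1"
          unfolding meas1 by measurable
        show "(\<lambda>t. E * of_real Bt * (1 / ((z + of_real t) powr of_real \<alpha>))) \<in> borel_measurable \<nu>1"
          unfolding meas1 by measurable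
        show "AE t in \<nu>1. (if t \<le> 0 then E * of_real Bt * (1 / ((z + of_real t) powr of_real \<alpha>)) else 0) = E * of_real Bt * (1 / ((z + of_real t) powr of_real \<alpha>))"
          using AEneg by (auto elim!: eventually_mono)
      qed
      also have "\<dots> = E * of_real Bt * Ctrans \<alpha> \<nu>1 z"
        unfolding Ctrans_def by (rule integral_mult_right_zero)
      finally show ?thesis .
    qed
    have "Ctrans (\<alpha> + \<beta>) (nu2 \<alpha> \<beta> \<nu>1) z = of_real (1 / Bt) * (E * of_real Bt * Ctrans \<alpha> \<nu>1 z)"
      using C2 C3 fub outer by simp
    also have "\<dots> = E * Ctrans \<alpha> \<nu>1 z" using Bt by (simp add: field_simps)
    finally have "exp (\<i> * complex_of_real (pi * \<beta>)) * Ctrans (\<alpha> + \<beta>) (nu2 \<alpha> \<beta> \<nu>1) z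
        = (exp (\<i> * complex_of_real (pi * \<beta>)) * E) * Ctrans \<alpha> \<nu>1 z" by simp
    also have "exp (\<i> * complex_of_real (pi * \<beta>)) * E = 1"
      unfolding E_def by (simp add: exp_add[symmetric])
    finally show ?thesis by simp
  qed
  show ?thesis using part1 part2 by blast
qed

end
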